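(* Let $g=\frac{\sqrt5-1}2$, $g\le\alpha<\beta\le1$, $x\in[\alpha-1,\alpha)$, $z\in[\beta-1,\beta)$ with $z-x\in\{0,1\}$ or $x+z\in\{0,1\}$. Let $n\ge1$ be such that $T_\alpha^{n-1}(x)<\frac{\beta}{\beta+1}$. Then there is some $k\ge1$ such that $T_\beta^k(z)-T_\alpha^n(x)\in\{0,1\}$ or $T_\alpha^n(x)+T_\beta^k(z)\in\{0,1\}$.
   Context: For $\alpha\in[\tfrac12,1]$, $T_\alpha:[\alpha-1,\alpha)\to[\alpha-1,\alpha)$ is $T_\alpha(x)=\frac1x-\lfloor\frac1x+1-\alpha\rfloor$ for $x\ne0$, $T_\alpha(0)=0$. *)

theory Defs
  imports Complex_Main
begin

definition T :: "real \<Rightarrow> real \<Rightarrow> real" where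
  "T \<alpha> x = (if x = 0 then 0 else 1 / x - of_int \<lfloor>1 / x + 1 - \<alpha>\<rfloor>)"

definition g :: real where
  "g = (sqrt 5 - 1) / 2"

end

theory Submission
  imports Defs
begin

definition cg :: "real \<Rightarrow> real \<Rightarrow> bool" where
  "cg u v \<longleftrightarrow> (\<exists>m::int. v = u + of_int m \<or> v = - u + of_int m)"

lemma T_cong: "\<exists>m::int. T a y = 1/y + of_int m"
proof (cases "y = 0")
  case True then show ?thesis by (intro exI[of _ 0]) (simp add: T_def)
next
  case False then show ?thesis by (intro exI[of _ "- \<lfloor>1/y + 1 - a\<rfloor>"]) (simp add: T_def)
qed

lemma T_fl: "y \<noteq> 0 \<Longrightarrow> \<lfloor>1/y + 1 - a\<rfloor> = c \<Longrightarrow> T a y = 1/y - of_int c"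
  by (simp add: T_def)

lemma T_dom: assumes "0 < a" "a \<le> 1" "a - 1 \<le> y" "y < a"
  shows "a - 1 \<le> T a y \<and> T a y < a"
proof (cases "y = 0")
  case True then show ?thesis using assms by (simp add: T_def)
next
  case False
  have "of_int \<lfloor>1/y+1-a\<rfloor> \<le> 1/y+1-a" "1/y+1-a < of_int \<lfloor>1/y+1-a\<rfloor> + 1"
    by linarith+
  moreover have "T a y = 1/y - of_int \<lfloor>1/y+1-a\<rfloor>" using False by (simp add: T_def)
  ultimately show ?thesis by linarith
qed

lemma Tn_dom: assumes "0 < a" "a \<le> 1" "a - 1 \<le> y" "y < a"
  shows "a - 1 \<le> (T a ^^ n) y \<and> (T a ^^ n) y < a"
  by (induction n) (use assms T_dom in auto)

lemma cg_rel: assumes "1/2 < a" "a < b" "b \<le> 1" "a-1 \<le> y" "y < a" "b-1 \<le> w" "w < b" "cg y w"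
  shows "w - y \<in> {0,1} \<or> y + w \<in> {0,1}"
proof -
  obtain m::int where "w = y + m \<or> w = -y + m" using assms(8) cg_def by auto
  then show ?thesis
  proof
    assume h: "w = y + m"
    have "-1 < real_of_int m" "real_of_int m < 2" using h assms by linarith+
    hence "-1 < m" "m < 2" by simp_all
    hence "m = 0 \<or> m = 1" by arith
    then show ?thesis using h by auto
  next
    assume h: "w = -y + m"
    have "-1 < real_of_int m" "real_of_int m < 2" using h assms by linarith+
    hence "-1 < m" "m < 2" by simp_all
    hence "m = 0 \<or> m = 1" by arith
    then show ?thesis using h by auto
  qed
qed

lemma step:
  assumes A: "1 \<le> a*(1+a)" "1/2 < a" "a < b" "b \<le> 1"
    and D: "a-1 \<le> y" "y < a" "b-1 \<le> w" "w < b"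
    and R: "w - y \<in> {0,1} \<or> y + w \<in> {0,1}"
  shows "(\<exists>i\<ge>1. cg (T a y) ((T b ^^ i) w)) \<or>
         (b/(b+1) \<le> y \<and> (\<exists>i\<ge>1. cg (T a (T a y)) ((T b ^^ i) w)))"
proof -
  have ia: "1/a \<le> 1 + a" using A by (simp add: field_simps)
  have ib: "1/b < 1/a" using A by (simp add: field_simps)
  obtain m1::int where m1: "T a y = 1/y + m1" using T_cong by blast
  from R have "w = y \<or> w = y + 1 \<or> w = -y \<or> w = 1 - y" by auto
  moreover
  { assume h: "w = y"
    obtain m2::int where m2: "T b w = 1/w + m2" using T_cong by blast
    have "cg (T a y) ((T b ^^ 1) w)" unfolding cg_def using m1 m2 h
      by (intro exI[of _ "m2 - m1"]) simp
    hence ?thesis by blast }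
  moreover
  { assume h: "w = -y"
    obtain m2::int where m2: "T b w = 1/w + m2" using T_cong by blast
    have "cg (T a y) ((T b ^^ 1) w)" unfolding cg_def using m1 m2 h
      by (intro exI[of _ "m2 + m1"]) simp
    hence ?thesis by blast }
  moreover
  { assume h: "w = y + 1"
    have y0: "y \<noteq> 0" using h A D by auto
    have wp: "0 < w" "w < 1" using h A D by auto
    have "1 < 1/w" using wp by (simp add: field_simps)
    moreover have "1/w \<le> 1/a" using wp h D A by (simp add: field_simps)
    ultimately have "\<lfloor>1/w + 1 - b\<rfloor> = 1" using ia A by (simp add: floor_eq_iff)
    hence v: "T b w = 1/w - 1" using wp by (simp add: T_fl)
    obtain m2::int where m2: "T b (T b w) = 1/(T b w) + m2" using T_cong by blast
    have "1/(1/w - 1) = -1/y - 1" using h y0 wp by (simp add: field_simps)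
    hence "(T b ^^ 2) w = - T a y + of_int (m1 + m2 - 1)"
      using m1 m2 v by (simp add: numeral_2_eq_2)
    hence "cg (T a y) ((T b ^^ 2) w)" unfolding cg_def by blast
    hence ?thesis by (intro disjI1 exI[of _ 2]) simp }
  moreover
  { assume h: "w = 1 - y"
    have y0: "0 < y" using h A D by auto
    have wp: "0 < w" using h A D by auto
    have w1: "w < 1" using h y0 by simp
    { assume yb: "y < b/(b+1)"
      have "y*(b+1) < b" using yb A by (simp add: field_simps)
      moreover have "w*(b+1) = b+1 - y*(b+1)" unfolding h by (simp add: algebra_simps)
      ultimately have "w*(b+1) > 1" by linarith
      hence "w > 1/(b+1)" using A by (simp add: field_simps)
      hence "1/w < b + 1" using wp A by (simp add: field_simps)
      moreover have "1 < 1/w" using wp w1 by (simp add: field_simps)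
      ultimately have "\<lfloor>1/w + 1 - b\<rfloor> = 1" using A by (simp add: floor_eq_iff)
      hence v: "T b w = 1/w - 1" using wp by (simp add: T_fl)
      obtain m2::int where m2: "T b (T b w) = 1/(T b w) + m2" using T_cong by blast
      have "1/(1/w - 1) = 1/y - 1" using h y0 wp w1 by (simp add: field_simps)
      hence "(T b ^^ 2) w = T a y + of_int (m2 - m1 - 1)"
        using m1 m2 v by (simp add: numeral_2_eq_2)
      hence "cg (T a y) ((T b ^^ 2) w)" unfolding cg_def by blast
      hence ?thesis by (intro disjI1 exI[of _ 2]) simp }
    moreover
    { assume yb: "b/(b+1) \<le> y"
      define c where "c = \<lfloor>1/y + 1 - a\<rfloor>"
      have "1/a < 1/y" using y0 D by (simp add: field_simps)
      moreover have "a \<le> 1/a" using A mult_mono[of a 1 a 1] by (simp add: field_simps)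
      moreover have "1/y \<le> 1 + 1/b" using yb y0 A by (simp add: field_simps)
      ultimately have "1 \<le> c" "c \<le> 2" unfolding c_def using ia ib by (simp_all add: floor_eq_iff le_floor_iff floor_le_iff)
      hence "c = 1 \<or> c = 2" by arith
      moreover
      { assume c1: "c = 1"
        hence x1: "T a y = 1/y - 1" using y0 c_def by (simp add: T_fl)
        obtain m3::int where m3: "T a (T a y) = 1/(T a y) + m3" using T_cong by blast
        obtain m2::int where m2: "T b w = 1/w + m2" using T_cong by blast
        have "1/(1/y - 1) = 1/w - 1" using h y0 wp w1 by (simp add: field_simps)
        hence "T b w = T a (T a y) + of_int (m2 - m3 + 1)" using x1 m3 m2 by simp
        hence "cg (T a (T a y)) ((T b ^^ 1) w)" unfolding cg_def by (simp only: One_nat_def funpow.simps comp_def id_apply) blast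
        hence ?thesis using yb by blast }
      moreover
      { assume c2: "c = 2"
        hence x1: "T a y = 1/y - 2" using y0 c_def by (simp add: T_fl)
        have "2 \<le> 1/y + 1 - a" using c2 c_def by linarith
        hence "1 + a \<le> 1/y" by simp
        hence "y \<le> 1/(1+a)" using y0 A by (simp add: field_simps)
        hence "y*(1+a) \<le> 1" using A y0 by (simp add: field_simps)
        hence "a/(1+a) \<le> w" using A unfolding h by (simp add: field_simps)
        hence "1/w \<le> 1 + 1/a" using wp A by (simp add: field_simps)
        moreover have "b \<le> y*(b+1)" using yb A by (simp add: field_simps)
        moreover have "1 + b \<le> 1/w" using wp w1 A \<open>b \<le> y*(b+1)\<close> unfolding h by (simp add: field_simps)
        ultimately have "\<lfloor>1/w + 1 - b\<rfloor> = 2" using ia A by (simp add: floor_eq_iff)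
        hence z1: "T b w = 1/w - 2" using wp by (simp add: T_fl)
        have "cg (T a (T a y)) ((T b ^^ 2) w)"
        proof (cases "y = 1/2")
          case True
          then have "w = 1/2" using h by simp
          have wh: "w = 1/2" by fact
          have "T a y = 0" using x1 unfolding True by simp
          moreover have "T b w = 0" using z1 unfolding wh by simp
          ultimately
          show ?thesis unfolding cg_def by (simp add: numeral_2_eq_2 T_def)
        next
          case False
          obtain m3::int where m3: "T a (T a y) = 1/(T a y) + m3" using T_cong by blast
          obtain m4::int where m4: "T b (T b w) = 1/(T b w) + m4" using T_cong by blast
          have "1 - 2*y \<noteq> 0" using False by simp
          hence "1/(1/w - 2) = - (1/(1/y - 2)) - 1" using h y0 wp w1 by (simp add: field_simps)
          hence "(T b ^^ 2) w = - T a (T a y) + of_int (m3 + m4 - 1)"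
            using x1 z1 m3 m4 by (simp add: numeral_2_eq_2)
          then show ?thesis unfolding cg_def by blast
        qed
        hence ?thesis using yb by (intro disjI2) (auto intro: exI[of _ 2]) }
      ultimately have ?thesis by blast }
    ultimately have ?thesis by (meson not_less) }
  ultimately show ?thesis by blast
qed



lemma g_facts: "1/2 < g" "g * (1 + g) = 1"
proof -
  have s: "sqrt 5 * sqrt 5 = 5" by simp
  have "2 < sqrt 5" by (rule real_less_rsqrt) simp
  thus "1/2 < g" unfolding g_def by simp
  show "g * (1 + g) = 1" unfolding g_def using s by (simp add: field_simps)
qed

theorem lemma4p3:
  fixes \<alpha> \<beta> x z :: real and n :: nat
  assumes "g \<le> \<alpha>" and "\<alpha> < \<beta>" and "\<beta> \<le> 1"
    and "\<alpha> - 1 \<le> x" and "x < \<alpha>"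
    and "\<beta> - 1 \<le> z" and "z < \<beta>"
    and "z - x \<in> {0, 1} \<or> x + z \<in> {0, 1}"
    and "n \<ge> 1"
    and "(T \<alpha> ^^ (n - 1)) x < \<beta> / (\<beta> + 1)"
  shows "\<exists>k\<ge>1. (T \<beta> ^^ k) z - (T \<alpha> ^^ n) x \<in> {0, 1}
              \<or> (T \<alpha> ^^ n) x + (T \<beta> ^^ k) z \<in> {0, 1}"
proof -
  have a2: "1/2 < \<alpha>" using g_facts assms(1) by linarith
  have "g * (1 + g) \<le> \<alpha> * (1 + \<alpha>)"
    using assms(1) g_facts by (intro mult_mono) auto
  hence a1: "1 \<le> \<alpha> * (1 + \<alpha>)" using g_facts by simp
  define xs where "xs j = (T \<alpha> ^^ j) x" for j
  define zs where "zs m = (T \<beta> ^^ m) z" for m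
  define Good where "Good j \<longleftrightarrow> (\<exists>m. (zs m - xs j \<in> {0,1} \<or> xs j + zs m \<in> {0,1}) \<and> (0 < j \<longrightarrow> 0 < m))" for j
  have xd: "\<alpha> - 1 \<le> xs j \<and> xs j < \<alpha>" for j
    unfolding xs_def using Tn_dom[of \<alpha> x j] assms a2 by auto
  have zd: "\<beta> - 1 \<le> zs m \<and> zs m < \<beta>" for m
    unfolding zs_def using Tn_dom[of \<beta> z m] assms a2 by auto
  have xS: "T \<alpha> (xs j) = xs (Suc j)" for j unfolding xs_def by simp
  have zS: "(T \<beta> ^^ i) (zs m) = zs (i + m)" for i m unfolding zs_def by (simp add: funpow_add)
  have main: "Good j \<or> (1 \<le> j \<and> \<beta>/(\<beta>+1) \<le> xs (j - 1) \<and> Good (Suc j))" for j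
  proof (induction j)
    case 0
    have "Good 0" unfolding Good_def xs_def zs_def using assms(8) by (intro exI[of _ 0]) simp
    then show ?case by simp
  next
    case (Suc j)
    show ?case
    proof (cases "Good j")
      case False
      then show ?thesis using Suc.IH by simp
    next
      case True
      then obtain m where m: "zs m - xs j \<in> {0,1} \<or> xs j + zs m \<in> {0,1}" unfolding Good_def by blast
      from step[OF a1 a2 assms(2) assms(3), of "xs j" "zs m"] xd[of j] zd[of m] m
      have "(\<exists>i\<ge>1. cg (T \<alpha> (xs j)) ((T \<beta> ^^ i) (zs m))) \<or>
         (\<beta>/(\<beta>+1) \<le> xs j \<and> (\<exists>i\<ge>1. cg (T \<alpha> (T \<alpha> (xs j))) ((T \<beta> ^^ i) (zs m))))"
        by auto
      then show ?thesis
      proof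
        assume "\<exists>i\<ge>1. cg (T \<alpha> (xs j)) ((T \<beta> ^^ i) (zs m))"
        then obtain i where i: "i \<ge> 1" "cg (xs (Suc j)) (zs (i + m))" unfolding xS zS by blast
        have "zs (i+m) - xs (Suc j) \<in> {0,1} \<or> xs (Suc j) + zs (i+m) \<in> {0,1}"
          using cg_rel[OF a2 assms(2) assms(3)] xd zd i(2) by blast
        hence "Good (Suc j)" unfolding Good_def using i(1) by (intro exI[of _ "i+m"]) auto
        then show ?thesis by simp
      next
        assume h: "\<beta>/(\<beta>+1) \<le> xs j \<and> (\<exists>i\<ge>1. cg (T \<alpha> (T \<alpha> (xs j))) ((T \<beta> ^^ i) (zs m)))"
        then obtain i where i: "i \<ge> 1" "cg (xs (Suc (Suc j))) (zs (i + m))" unfolding xS zS by blast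
        have "zs (i+m) - xs (Suc (Suc j)) \<in> {0,1} \<or> xs (Suc (Suc j)) + zs (i+m) \<in> {0,1}"
          using cg_rel[OF a2 assms(2) assms(3)] xd zd i(2) by blast
        hence "Good (Suc (Suc j))" unfolding Good_def using i(1) by (intro exI[of _ "i+m"]) auto
        then show ?thesis using h by simp
      qed
    qed
  qed
  have "Good n" using main[of n] assms(10) unfolding xs_def by auto
  then obtain m where "zs m - xs n \<in> {0,1} \<or> xs n + zs m \<in> {0,1}" "0 < m"
    unfolding Good_def using assms(9) by auto
  then show ?thesis unfolding xs_def zs_def by (intro exI[of _ m]) auto
qed

end
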